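(* Let $\Gamma$ be a Coxeter graph with Coxeter matrix $M=(m_{s,t})_{s,t\in S}$. Let $u,v\in W[\Gamma]$ and $s,t\in S$. If $u(\alpha_s)=v(\alpha_t)$ in $V$, then $u\cdot\sigma_s=v\cdot\sigma_t$ in $KVA[\Gamma]$ and $u\cdot(\tau_s\sigma_s)=v\cdot(\tau_t\sigma_t)$ in $PVA[\Gamma]$.
   Context: A Coxeter matrix on a countable set $S$ is a symmetric matrix $M=(m_{s,t})_{s,t\in S}$ with entries in $\mathbb{N}\cup\{\infty\}$ such that $m_{s,s}=1$ for all $s$ and $m_{s,t}=m_{t,s}\ge 2$ for $s\neq t$; it is encoded by a Coxeter graph $\Gamma$ with vertex set $S$ ($\Gamma$ is called finite if $S$ is finite). For letters $a,b$ and an integer $m\ge 2$, $\Pi_L(a,b,m)$ denotes the alternating word $aba\cdots$ of length $m$ beginning with $a$, and $\Pi_R(b,a,m)$ denotes the alternating word $\cdots aba$ of length $m$ ending with $a$; the same notation denotes the elements these words represent in a group. The Artin group $A[\Gamma]$ is given by the presentation $\langle S\mid \Pi_R(t,s,m_{s,t})=\Pi_R(s,t,m_{s,t})\text{ for } s\neq t,\ m_{s,t}\neq\infty\rangle$, and the Coxeter group $W[\Gamma]$ is the quotient of $A[\Gamma]$ by the relations $s^2=1$, $s\in S$. The virtual Artin group $VA[\Gamma]$ is the group generated by two sets $\{\sigma_s\mid s\in S\}$ and $\{\tau_s\mid s\in S\}$ in bijection with $S$, subject to the following relations, for all $s,t\in S$ with $s\neq t$ and $m_{s,t}\neq\infty$: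 (v1) $\Pi_R(\sigma_t,\sigma_s,m_{s,t})=\Pi_R(\sigma_s,\sigma_t,m_{s,t})$; (v2) $\Pi_R(\tau_t,\tau_s,m_{s,t})=\Pi_R(\tau_s,\tau_t,m_{s,t})$, together with $\tau_s^2=1$ for all $s\in S$; (v3) $\Pi_R(\tau_s,\tau_t,m_{s,t}-1)\,\sigma_s=\sigma_r\,\Pi_R(\tau_s,\tau_t,m_{s,t}-1)$, where $r=s$ if $m_{s,t}$ is even and $r=t$ if $m_{s,t}$ is odd. We have homomorphisms $\iota_A:A[\Gamma]\to VA[\Gamma]$, $s\mapsto\sigma_s$; $\iota_W:W[\Gamma]\to VA[\Gamma]$, $s\mapsto\tau_s$; $\pi_K:VA[\Gamma]\to W[\Gamma]$, $\sigma_s\mapsto 1$, $\tau_s\mapsto s$; and $\pi_P:VA[\Gamma]\to W[\Gamma]$, $\sigma_s\mapsto s$, $\tau_s\mapsto s$. Set $KVA[\Gamma]=\ker\pi_K$ and $PVA[\Gamma]=\ker\pi_P$. Let $V$ be the real vector space with basis $\{\alpha_s\mid s\in S\}$ (simple roots), with the symmetric bilinear form $\langle\alpha_s,\alpha_t\rangle=-2\cos(\pi/m_{s,t})$ if $m_{s,t}\neq\infty$ and $=-2$ if $m_{s,t}=\infty$. $W[\Gamma]$ acts faithfully on $V$ by $s(v)=v-\langle v,\alpha_s\rangle\alpha_s$. For $w\in W[\Gamma]$ and $g$ in $KVA[\Gamma]$ or $PVA[\Gamma]$ (normal subgroups of $VA[\Gamma]$), write $w\cdot g=\iota_W(w)\,g\,\iota_W(w)^{-1}$.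 Note $\sigma_s\in KVA[\Gamma]$ and $\tau_s\sigma_s\in PVA[\Gamma]$. *)

theory Defs
  imports Complex_Main "HOL-Library.Extended_Nat" "HOL-Library.Countable"
begin

text \<open>The index set S is the (countable) type 'a itself. Entries lie in enat, infinity = \<infinity>.\<close>

definition coxeter_matrix :: "('a \<Rightarrow> 'a \<Rightarrow> enat) \<Rightarrow> bool" where
  "coxeter_matrix M \<longleftrightarrow> (\<forall>s. M s s = 1) \<and>
     (\<forall>s t. s \<noteq> t \<longrightarrow> M s t = M t s \<and> M s t \<ge> 2)"

text \<open>A letter is a generator together with a sign (True = the generator, False = its inverse).\<close>
type_synonym 'g word = "('g \<times> bool) list"

definition winv :: "'g word \<Rightarrow> 'g word" where
  "winv w = rev (map (\<lambda>(g, b). (g, \<not> b)) w)"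

inductive pres_eq :: "('g word \<times> 'g word) set \<Rightarrow> 'g word \<Rightarrow> 'g word \<Rightarrow> bool"
  for R where
  pres_refl: "pres_eq R w w"
| pres_sym: "pres_eq R w w' \<Longrightarrow> pres_eq R w' w"
| pres_trans: "pres_eq R w w' \<Longrightarrow> pres_eq R w' w'' \<Longrightarrow> pres_eq R w w''"
| pres_rel: "(l, r) \<in> R \<Longrightarrow> pres_eq R (p @ l @ q) (p @ r @ q)"
| pres_cancel: "pres_eq R (p @ [(x, b), (x, \<not> b)] @ q) (p @ q)"

text \<open>Alternating words: alt_R b a m is the word ... a b a of length m ending with a.\<close>
definition alt_R :: "'x \<Rightarrow> 'x \<Rightarrow> nat \<Rightarrow> 'x list" where
  "alt_R b a m = rev (map (\<lambda>i. if even i then a else b) [0..<m])"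

datatype 'a vgen = Sig 'a | Tau 'a

definition pos :: "'g list \<Rightarrow> 'g word" where
  "pos xs = map (\<lambda>x. (x, True)) xs"

definition va_rels :: "('a \<Rightarrow> 'a \<Rightarrow> enat) \<Rightarrow> ('a vgen word \<times> 'a vgen word) set" where
  "va_rels M =
     {(pos (alt_R (Sig t) (Sig s) k), pos (alt_R (Sig s) (Sig t) k)) | s t k. s \<noteq> t \<and> M s t = enat k}
   \<union> {(pos (alt_R (Tau t) (Tau s) k), pos (alt_R (Tau s) (Tau t) k)) | s t k. s \<noteq> t \<and> M s t = enat k}
   \<union> {(pos [Tau s, Tau s], []) | s. True}
   \<union> {(pos (alt_R (Tau s) (Tau t) (k - 1) @ [Sig s]),
        pos (Sig (if even k then s else t) # alt_R (Tau s) (Tau t) (k - 1))) | s t k.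
        s \<noteq> t \<and> M s t = enat k}"

definition va_eq :: "('a \<Rightarrow> 'a \<Rightarrow> enat) \<Rightarrow> 'a vgen word \<Rightarrow> 'a vgen word \<Rightarrow> bool" where
  "va_eq M = pres_eq (va_rels M)"

text \<open>iota_W on a word u = s1...sk of W (every element of W is such a product):\<close>
definition iotaW :: "'a list \<Rightarrow> 'a vgen word" where
  "iotaW u = pos (map Tau u)"

text \<open>w . g = iota_W(w) g iota_W(w)^{-1}\<close>
definition wconj :: "'a list \<Rightarrow> 'a vgen word \<Rightarrow> 'a vgen word" where
  "wconj u g = iotaW u @ g @ winv (iotaW u)"

text \<open>V = finitely supported functions 'a \<Rightarrow> real; simple root alpha_s = indicator of s.\<close>
definition root :: "'a \<Rightarrow> 'a \<Rightarrow> real" where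
  "root s = (\<lambda>x. if x = s then 1 else 0)"

definition bform_gen :: "('a \<Rightarrow> 'a \<Rightarrow> enat) \<Rightarrow> 'a \<Rightarrow> 'a \<Rightarrow> real" where
  "bform_gen M s t = (case M s t of enat k \<Rightarrow> - 2 * cos (pi / real k) | \<infinity> \<Rightarrow> - 2)"

definition bform :: "('a \<Rightarrow> 'a \<Rightarrow> enat) \<Rightarrow> ('a \<Rightarrow> real) \<Rightarrow> ('a \<Rightarrow> real) \<Rightarrow> real" where
  "bform M v w = (\<Sum>s\<in>{s. v s \<noteq> 0}. \<Sum>t\<in>{t. w t \<noteq> 0}. v s * w t * bform_gen M s t)"

definition refl_act :: "('a \<Rightarrow> 'a \<Rightarrow> enat) \<Rightarrow> 'a \<Rightarrow> ('a \<Rightarrow> real) \<Rightarrow> ('a \<Rightarrow> real)" where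
  "refl_act M s v = (\<lambda>x. v x - bform M v (root s) * root s x)"

definition word_act :: "('a \<Rightarrow> 'a \<Rightarrow> enat) \<Rightarrow> 'a list \<Rightarrow> ('a \<Rightarrow> real) \<Rightarrow> ('a \<Rightarrow> real)" where
  "word_act M u v = foldr (refl_act M) u v"

end

theory Submission
  imports Defs
begin


section \<open>Presentations\<close>

lemma pres_cong: "pres_eq R a b \<Longrightarrow> pres_eq R (u @ a @ v) (u @ b @ v)"
proof (induction arbitrary: u v rule: pres_eq.induct)
  case (pres_refl w) then show ?case by (rule pres_eq.pres_refl)
next
  case (pres_sym w w') then show ?case by (blast intro: pres_eq.pres_sym)
next
  case (pres_trans w w' w'') then show ?case by (blast intro: pres_eq.pres_trans)
next
  case (pres_rel l r p q)
  from pres_eq.pres_rel[OF pres_rel(1), of "u @ p" "q @ v"] show ?case by simp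
next
  case (pres_cancel p x b q)
  from pres_eq.pres_cancel[of R "u @ p" x b "q @ v"] show ?case by simp
qed

lemma pres_app: "pres_eq R a b \<Longrightarrow> pres_eq R c d \<Longrightarrow> pres_eq R (a @ c) (b @ d)"
proof -
  assume 1: "pres_eq R a b" and 2: "pres_eq R c d"
  have "pres_eq R ([] @ a @ c) ([] @ b @ c)" using pres_cong[OF 1] .
  moreover have "pres_eq R (b @ c @ []) (b @ d @ [])" using pres_cong[OF 2] .
  ultimately show ?thesis by (auto intro: pres_eq.pres_trans)
qed

lemma winv_append[simp]: "winv (a @ b) = winv b @ winv a"
  by (simp add: winv_def)

lemma winv_Nil[simp]: "winv [] = []" by (simp add: winv_def)

lemma winv_Cons: "winv (x # w) = winv w @ [(fst x, \<not> snd x)]"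
  by (cases x) (simp add: winv_def)

lemma winv_winv[simp]: "winv (winv w) = w"
  by (induction w) (auto simp: winv_def)

lemma pres_inv_r: "pres_eq R (w @ winv w) []"
proof (induction w)
  case Nil then show ?case by (simp add: pres_eq.pres_refl)
next
  case (Cons x w)
  obtain g b where x: "x = (g, b)" by (cases x)
  have "pres_eq R ([x] @ (w @ winv w) @ [(g, \<not> b)]) ([x] @ [] @ [(g, \<not> b)])"
    by (rule pres_cong[OF Cons])
  moreover have "pres_eq R ([] @ [(g, b), (g, \<not> b)] @ []) ([] @ [])"
    by (rule pres_eq.pres_cancel)
  ultimately show ?case using x by (auto simp: winv_Cons intro: pres_eq.pres_trans)
qed

lemma pres_inv_l: "pres_eq R (winv w @ w) []"
  using pres_inv_r[of R "winv w"] by simp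

lemma pres_winv: "pres_eq R a b \<Longrightarrow> pres_eq R (winv a) (winv b)"
proof -
  assume ab: "pres_eq R a b"
  have "pres_eq R (winv a @ [] @ []) (winv a @ (b @ winv b) @ [])"
    by (rule pres_cong, rule pres_eq.pres_sym, rule pres_inv_r)
  moreover have "pres_eq R (winv a @ b @ winv b) (winv a @ a @ winv b)"
    by (rule pres_cong, rule pres_eq.pres_sym, rule ab)
  moreover have "pres_eq R ([] @ (winv a @ a) @ winv b) ([] @ [] @ winv b)"
    by (rule pres_cong, rule pres_inv_l)
  ultimately show ?thesis by (auto intro: pres_eq.pres_trans)
qed

definition wc :: "'g word \<Rightarrow> 'g word \<Rightarrow> 'g word" where
  "wc P g = P @ g @ winv P"

lemma wc_cong: "pres_eq R P P' \<Longrightarrow> pres_eq R g g' \<Longrightarrow> pres_eq R (wc P g) (wc P' g')"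
  unfolding wc_def by (intro pres_app pres_winv)

lemma wc_app: "wc (P @ Q) g = wc P (wc Q g)"
  by (simp add: wc_def)

lemma wc_comm: "pres_eq R (P @ g) (g' @ P) \<Longrightarrow> pres_eq R (wc P g) g'"
proof -
  assume h: "pres_eq R (P @ g) (g' @ P)"
  have "pres_eq R ((P @ g) @ winv P) ((g' @ P) @ winv P)"
    by (rule pres_app[OF h pres_eq.pres_refl])
  moreover have "pres_eq R (g' @ (P @ winv P) @ []) (g' @ [] @ [])"
    by (rule pres_cong, rule pres_inv_r)
  ultimately show ?thesis unfolding wc_def by (auto intro: pres_eq.pres_trans)
qed

lemma wc_mult': "pres_eq R (wc P (g @ h)) (wc P g @ wc P h)"
proof -
  have "pres_eq R ((P @ g) @ [] @ (h @ winv P)) ((P @ g) @ (winv P @ P) @ (h @ winv P))"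
    by (rule pres_cong, rule pres_eq.pres_sym, rule pres_inv_l)
  then show ?thesis by (simp add: wc_def)
qed

section \<open>Alternating words\<close>

lemma alt_R_0[simp]: "alt_R b a 0 = []" by (simp add: alt_R_def)

lemma alt_R_Suc: "alt_R b a (Suc n) = (if even n then a else b) # alt_R b a n"
  by (simp add: alt_R_def)

lemma alt_R_snoc: "alt_R b a (Suc n) = alt_R a b n @ [a]"
  by (induction n arbitrary: a b) (auto simp: alt_R_Suc)

lemma length_alt_R[simp]: "length (alt_R b a n) = n" by (simp add: alt_R_def)

lemma set_alt_R: "set (alt_R b a n) \<subseteq> {a, b}"
  by (induction n) (auto simp: alt_R_Suc)

lemma map_alt_R: "map f (alt_R b a n) = alt_R (f b) (f a) n"
  by (induction n) (auto simp: alt_R_Suc)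

lemma alt_char_aux:
  assumes "set z \<subseteq> {a, b}" "a \<noteq> b" "\<forall>i. Suc i < length z \<longrightarrow> z ! i \<noteq> z ! Suc i"
    "z \<noteq> []" "last z = b"
  shows "\<forall>d < length z. z ! (length z - 1 - d) = (if even d then b else a)"
proof (intro allI impI)
  fix d assume "d < length z"
  then show "z ! (length z - 1 - d) = (if even d then b else a)"
  proof (induction d)
    case 0 then show ?case using assms(4,5) by (simp add: last_conv_nth)
  next
    case (Suc d)
    have IH: "z ! (length z - 1 - d) = (if even d then b else a)" using Suc by simp
    have i: "Suc (length z - 1 - Suc d) = length z - 1 - d" "length z - 1 - d < length z" using Suc.prems by auto
    have ne: "z ! (length z - 1 - Suc d) \<noteq> z ! (length z - 1 - d)"
      using assms(3)[rule_format, of "length z - 1 - Suc d"] i by simp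
    have "length z - 1 - Suc d < length z" using Suc.prems by linarith
    then have "z ! (length z - 1 - Suc d) \<in> {a, b}" using assms(1) nth_mem by blast
    then show ?case using ne IH by auto
  qed
qed

lemma alt_char:
  assumes "set z \<subseteq> {a, b}" "a \<noteq> b" "\<forall>i. Suc i < length z \<longrightarrow> z ! i \<noteq> z ! Suc i"
    "z \<noteq> []" "last z = b"
  shows "z = alt_R a b (length z)"
proof (rule nth_equalityI)
  show "length z = length (alt_R a b (length z))" by simp
next
  fix i assume i: "i < length z"
  have h: "\<forall>d < length z. z ! (length z - 1 - d) = (if even d then b else a)"
    by (rule alt_char_aux[OF assms])
  have "z ! i = (if even (length z - 1 - i) then b else a)"
    using h[rule_format, of "length z - 1 - i"] i by simp
  moreover have "alt_R a b (length z) ! i = (if even (length z - 1 - i) then b else a)"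
    using i by (simp add: alt_R_def rev_nth)
  ultimately show "z ! i = alt_R a b (length z) ! i" by simp
qed



definition fs :: "('a \<Rightarrow> real) \<Rightarrow> bool" where "fs v \<longleftrightarrow> finite {x. v x \<noteq> 0}"

definition ccoef :: "('a \<Rightarrow> 'a \<Rightarrow> enat) \<Rightarrow> 'a \<Rightarrow> 'a \<Rightarrow> real" where
  "ccoef M s t = (case M s t of enat k \<Rightarrow> cos (pi / real k) | \<infinity> \<Rightarrow> 1)"

lemma bform_gen_ccoef: "bform_gen M s t = -2 * ccoef M s t"
  by (cases "M s t") (simp_all add: bform_gen_def ccoef_def)

lemma bform_root: "bform M v (root x) = (\<Sum>y\<in>{y. v y \<noteq> 0}. v y * bform_gen M y x)"
proof -
  have "{t. root x t \<noteq> 0} = {x}" by (auto simp: root_def)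
  then show ?thesis by (simp add: bform_def root_def)
qed

lemma F_sup: "fs v \<Longrightarrow> finite S \<Longrightarrow> {y. v y \<noteq> 0} \<subseteq> S \<Longrightarrow>
   bform M v (root x) = (\<Sum>y\<in>S. v y * bform_gen M y x)"
  unfolding bform_root by (rule sum.mono_neutral_left) auto

lemma fs_root[simp]: "fs (root s)"
proof -
  have "{x. root s x \<noteq> 0} = {s}" by (auto simp: root_def)
  then show ?thesis by (simp add: fs_def)
qed

lemma fs_lin[simp]: "fs v \<Longrightarrow> fs w \<Longrightarrow> fs (\<lambda>x. a * v x + b * w x)"
  unfolding fs_def by (rule finite_subset[of _ "{x. v x \<noteq> 0} \<union> {x. w x \<noteq> 0}"]) auto

lemma fs_neg[simp]: "fs v \<Longrightarrow> fs (\<lambda>x. - v x)"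
  unfolding fs_def by simp

lemma fs_smul[simp]: "fs v \<Longrightarrow> fs (\<lambda>x. a * v x)"
  unfolding fs_def by (rule finite_subset[of _ "{x. v x \<noteq> 0}"]) auto

lemma fs_refl[simp]: "fs v \<Longrightarrow> fs (refl_act M s v)"
  unfolding fs_def refl_act_def
  by (rule finite_subset[of _ "{x. v x \<noteq> 0} \<union> {s}"]) (auto simp: root_def)

lemma fs_act[simp]: "fs v \<Longrightarrow> fs (word_act M z v)"
  by (induction z) (auto simp: word_act_def)

lemma act_Nil[simp]: "word_act M [] v = v" by (simp add: word_act_def)
lemma act_Cons[simp]: "word_act M (x # z) v = refl_act M x (word_act M z v)" by (simp add: word_act_def)
lemma act_append[simp]: "word_act M (y @ z) v = word_act M y (word_act M z v)" by (simp add: word_act_def)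

lemma F_lin:
  assumes "fs v" "fs w"
  shows "bform M (\<lambda>x. a * v x + b * w x) (root s) = a * bform M v (root s) + b * bform M w (root s)"
proof -
  let ?S = "{x. v x \<noteq> 0} \<union> {x. w x \<noteq> 0}"
  have fin: "finite ?S" using assms by (simp add: fs_def)
  have "bform M (\<lambda>x. a * v x + b * w x) (root s) = (\<Sum>y\<in>?S. (a * v y + b * w y) * bform_gen M y s)"
    by (rule F_sup) (use assms fin in auto)
  also have "\<dots> = a * (\<Sum>y\<in>?S. v y * bform_gen M y s) + b * (\<Sum>y\<in>?S. w y * bform_gen M y s)"
    by (simp add: sum_distrib_left sum.distrib algebra_simps)
  also have "\<dots> = a * bform M v (root s) + b * bform M w (root s)"
    using F_sup[OF assms(1) fin] F_sup[OF assms(2) fin] by auto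
  finally show ?thesis .
qed

lemma F_root: "bform M (root y) (root x) = bform_gen M y x"
proof -
  have "bform M (root y) (root x) = (\<Sum>z\<in>{y}. root y z * bform_gen M z x)"
    by (rule F_sup[OF fs_root]) (auto simp: root_def)
  then show ?thesis by (simp add: root_def)
qed

lemma refl_lin:
  assumes "fs v" "fs w"
  shows "refl_act M s (\<lambda>x. a * v x + b * w x) = (\<lambda>x. a * refl_act M s v x + b * refl_act M s w x)"
  unfolding refl_act_def F_lin[OF assms] by (auto simp: algebra_simps)

lemma act_lin:
  assumes "fs v" "fs w"
  shows "word_act M z (\<lambda>x. a * v x + b * w x) = (\<lambda>x. a * word_act M z v x + b * word_act M z w x)"
  using assms by (induction z) (auto simp: refl_lin)

lemma act_neg:
  assumes "fs v"
  shows "word_act M z (\<lambda>x. - v x) = (\<lambda>x. - word_act M z v x)"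
  using act_lin[OF assms assms, of M z "-1" 0] by simp

lemma act_smul:
  assumes "fs v"
  shows "word_act M z (\<lambda>x. a * v x) = (\<lambda>x. a * word_act M z v x)"
  using act_lin[OF assms assms, of M z a 0] by simp

locale cox =
  fixes M :: "'a \<Rightarrow> 'a \<Rightarrow> enat"
  assumes cm: "coxeter_matrix M"
begin

abbreviation "act \<equiv> word_act M"

lemma gss[simp]: "bform_gen M s s = 2"
  using cm by (simp add: coxeter_matrix_def bform_gen_def one_enat_def)

lemma Msym: "M s t = M t s"
  using cm by (cases "s = t") (auto simp: coxeter_matrix_def)

lemma gsym: "bform_gen M s t = bform_gen M t s"
  by (simp add: bform_gen_def Msym)

lemma ccoef_sym: "ccoef M s t = ccoef M t s"
  by (simp add: ccoef_def Msym)

lemma M_ge2: "s \<noteq> t \<Longrightarrow> M s t \<ge> 2"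
  using cm by (auto simp: coxeter_matrix_def)

lemma refl_root: "refl_act M s (root s) = (\<lambda>x. - root s x)"
  unfolding refl_act_def F_root by simp

lemma refl_invol:
  assumes "fs v"
  shows "refl_act M s (refl_act M s v) = v"
proof -
  have e: "refl_act M s v = (\<lambda>x. 1 * v x + (- bform M v (root s)) * root s x)"
    by (simp add: refl_act_def)
  have "bform M (refl_act M s v) (root s) = - bform M v (root s)"
    unfolding e F_lin[OF assms fs_root] F_root by simp
  then show ?thesis by (simp add: refl_act_def)
qed

lemma act_rev: "fs v \<Longrightarrow> act (rev z) (act z v) = v"
  by (induction z arbitrary: v) (auto simp: refl_invol)

lemma act_inj: "fs u \<Longrightarrow> fs v \<Longrightarrow> act z u = act z v \<Longrightarrow> u = v"
  by (metis act_rev)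

end



fun U :: "real \<Rightarrow> nat \<Rightarrow> real" where
  "U c 0 = 0"
| "U c (Suc 0) = 1"
| "U c (Suc (Suc n)) = 2 * c * U c (Suc n) - U c n"

lemma U_inf: "U 1 n = real n"
  by (induction "1::real" n rule: U.induct) auto

lemma U_sin: "U (cos th) n * sin th = sin (real n * th)"
proof (induction "cos th" n rule: U.induct)
  case 1 then show ?case by simp
next
  case 2 then show ?case by simp
next
  case (3 n)
  define x where "x = real (Suc n) * th"
  have e1: "real (Suc (Suc n)) * th = x + th" by (simp add: x_def algebra_simps)
  have e2: "real n * th = x - th" by (simp add: x_def algebra_simps)
  have "U (cos th) (Suc (Suc n)) * sin th = 2 * cos th * (U (cos th) (Suc n) * sin th) - U (cos th) n * sin th"
    by (simp add: algebra_simps)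
  also have "\<dots> = 2 * cos th * sin x - sin (x - th)" using 3 by (simp add: x_def e2)
  also have "\<dots> = sin (x + th)" by (simp add: sin_add sin_diff)
  also have "sin (x + th) = sin (real (Suc (Suc n)) * th)" by (simp only: e1)
  finally show ?case .
qed

context cox
begin

lemma fin_m: "s \<noteq> t \<Longrightarrow> M s t = enat m \<Longrightarrow> 2 \<le> m"
  using M_ge2[of s t] by (simp add: numeral_eq_enat)

lemma U_fin:
  assumes "s \<noteq> t" "M s t = enat m"
  shows "U (ccoef M s t) n = sin (real n * (pi / real m)) / sin (pi / real m)"
    and "0 < sin (pi / real m)"
proof -
  have m: "2 \<le> m" using fin_m[OF assms] .
  show "0 < sin (pi / real m)" using m by (intro sin_gt_zero) (auto simp: field_simps)
  then show "U (ccoef M s t) n = sin (real n * (pi / real m)) / sin (pi / real m)"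
    using U_sin[of "pi / real m" n] assms(2) by (simp add: ccoef_def field_simps)
qed

lemma U_pos:
  assumes "s \<noteq> t" "0 < n" "enat n < M s t"
  shows "0 < U (ccoef M s t) n"
proof (cases "M s t")
  case (enat m)
  have "n < m" using assms(3) enat by simp
  then have "0 < sin (real n * (pi / real m))" using assms(2)
    by (intro sin_gt_zero) (auto simp: field_simps)
  then show ?thesis using U_fin[OF assms(1) enat] by simp
next
  case infinity
  then show ?thesis using assms by (simp add: ccoef_def U_inf)
qed

lemma U_nonneg:
  assumes "s \<noteq> t" "enat n \<le> M s t"
  shows "0 \<le> U (ccoef M s t) n"
proof (cases "M s t")
  case (enat m)
  have m: "2 \<le> m" using fin_m[OF assms(1) enat] .
  have "n \<le> m" using assms(2) enat by simp
  then have "real n * (pi / real m) \<le> pi" using m by (simp add: field_simps)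
  then have "0 \<le> sin (real n * (pi / real m))"
    by (intro sin_ge_zero) auto
  then show ?thesis using U_fin[OF assms(1) enat] by simp
next
  case infinity
  then show ?thesis using assms by (simp add: ccoef_def U_inf)
qed

lemma U_m:
  assumes "s \<noteq> t" "M s t = enat m"
  shows "U (ccoef M s t) m = 0" "U (ccoef M s t) (m - 1) = 1" "U (ccoef M s t) (Suc m) = -1"
proof -
  have m: "2 \<le> m" using fin_m[OF assms] .
  have sp: "0 < sin (pi / real m)" using U_fin(2)[OF assms] .
  have "real m * (pi / real m) = pi" using m by simp
  then show "U (ccoef M s t) m = 0" using U_fin(1)[OF assms, of m] by simp
  have "real (m - 1) * (pi / real m) = pi - pi / real m" using m by (simp add: of_nat_diff field_simps)
  then show "U (ccoef M s t) (m - 1) = 1" using U_fin(1)[OF assms, of "m - 1"] sp by simp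
  have "real (Suc m) * (pi / real m) = pi / real m + pi" using m by (simp add: field_simps)
  then show "U (ccoef M s t) (Suc m) = -1" using U_fin(1)[OF assms, of "Suc m"] sp by simp
qed

lemma ccoef_bounds:
  assumes "s \<noteq> t" "M s t = enat m"
  shows "0 \<le> ccoef M s t" "ccoef M s t < 1"
proof -
  have m: "2 \<le> m" using fin_m[OF assms] .
  have p: "0 < pi / real m" "pi / real m \<le> pi / 2" using m by (auto simp: field_simps)
  show "0 \<le> ccoef M s t" using assms p by (simp add: ccoef_def cos_ge_zero)
  have "cos (pi / real m) < cos 0" using p pi_gt_zero by (intro cos_monotone_0_pi) linarith+
  then show "ccoef M s t < 1" using assms by (simp add: ccoef_def)
qed

lemma gst: "s \<noteq> t \<Longrightarrow> bform_gen M s t = -2 * ccoef M s t"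
  by (simp add: bform_gen_ccoef)

lemma rho:
  assumes "s \<noteq> t"
  shows "act (alt_R s t k) (root s) =
    (\<lambda>x. U (ccoef M s t) (Suc k) * root (if even k then s else t) x
       + U (ccoef M s t) k * root (if even k then t else s) x)"
proof (induction k)
  case 0 then show ?case by simp
next
  case (Suc k)
  let ?c = "ccoef M s t"
  have gts: "bform_gen M t s = -2 * ?c" using gsym gst assms by metis
  have gst': "bform_gen M s t = -2 * ?c" using gst assms by metis
  show ?case
  proof (cases "even k")
    case True
    have "act (alt_R s t (Suc k)) (root s) =
      refl_act M t (\<lambda>x. U ?c (Suc k) * root s x + U ?c k * root t x)"
      using Suc True by (simp add: alt_R_Suc)
    also have "\<dots> = (\<lambda>x. U ?c (Suc (Suc k)) * root t x + U ?c (Suc k) * root s x)"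
      unfolding refl_act_def F_lin[OF fs_root fs_root] F_root gst' gss
      by (rule ext) (simp add: algebra_simps)
    finally show ?thesis using True by simp
  next
    case False
    have "act (alt_R s t (Suc k)) (root s) =
      refl_act M s (\<lambda>x. U ?c (Suc k) * root t x + U ?c k * root s x)"
      using Suc False by (simp add: alt_R_Suc)
    also have "\<dots> = (\<lambda>x. U ?c (Suc (Suc k)) * root s x + U ?c (Suc k) * root t x)"
      unfolding refl_act_def F_lin[OF fs_root fs_root] F_root gts gss
      by (rule ext) (simp add: algebra_simps)
    finally show ?thesis using False by simp
  qed
qed

lemma Pi_act:
  assumes "s \<noteq> t" "M s t = enat m"
  shows "act (alt_R s t (m - 1)) (root s) = root (if even m then s else t)"
proof -
  have m: "2 \<le> m" using fin_m[OF assms] .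
  have "Suc (m - 1) = m" using m by simp
  then have "act (alt_R s t (m - 1)) (root s) =
    (\<lambda>x. U (ccoef M s t) m * root (if even (m - 1) then s else t) x
       + U (ccoef M s t) (m - 1) * root (if even (m - 1) then t else s) x)"
    using rho[OF assms(1), of "m - 1"] by simp
  also have "\<dots> = root (if even (m - 1) then t else s)" using U_m[OF assms] by simp
  also have "(if even (m - 1) then t else s) = (if even m then s else t)" using m by auto
  finally show ?thesis .
qed

lemma braid_root:
  assumes "s \<noteq> t" "M s t = enat m"
  shows "act (alt_R t s m) (root s) = act (alt_R s t m) (root s)"
proof -
  have m: "2 \<le> m" using fin_m[OF assms] .
  have sm: "Suc (m - 1) = m" using m by simp
  have "act (alt_R t s m) (root s) = act (alt_R s t (m - 1)) (\<lambda>x. - root s x)"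
    using alt_R_snoc[of t s "m - 1"] sm refl_root by simp
  also have "\<dots> = (\<lambda>x. - root (if even m then s else t) x)"
    using Pi_act[OF assms] by (simp add: act_neg)
  also have "\<dots> = act (alt_R s t m) (root s)"
    unfolding rho[OF assms(1), of m] using U_m[OF assms] by simp
  finally show ?thesis .
qed

lemma fixed_act:
  assumes "bform M v (root s) = 0" "bform M v (root t) = 0" "set z \<subseteq> {s, t}"
  shows "act z v = v"
  using assms(3)
proof (induction z)
  case Nil then show ?case by simp
next
  case (Cons x z)
  then have "act z v = v" "x = s \<or> x = t" by auto
  then show ?case using assms(1,2) by (auto simp: refl_act_def)
qed

lemma braid_lin:
  assumes "s \<noteq> t" "M s t = enat m" "fs v"
  shows "act (alt_R t s m) v = act (alt_R s t m) v"
proof -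
  let ?c = "ccoef M s t"
  have c: "0 \<le> ?c" "?c < 1" using ccoef_bounds[OF assms(1,2)] by auto
  define d where "d = 1 - ?c * ?c"
  have "?c * ?c \<le> ?c" using c by (simp add: mult_left_le_one_le)
  then have d: "d > 0" using c unfolding d_def by linarith
  define fs' where "fs' = bform M v (root s)"
  define ft where "ft = bform M v (root t)"
  define al where "al = (fs' + ?c * ft) / (2 * d)"
  define be where "be = (ft + ?c * fs') / (2 * d)"
  define w where "w = (\<lambda>x. al * root s x + be * root t x)"
  define v' where "v' = (\<lambda>x. 1 * v x + (-1) * w x)"
  have fsw: "fs w" unfolding w_def by simp
  have fsv': "fs v'" unfolding v'_def using fs_lin[OF assms(3) fsw, of 1 "-1"] by simp
  have gts: "bform_gen M t s = -2 * ?c" using gsym gst assms(1) by metis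
  have gst': "bform_gen M s t = -2 * ?c" using gst assms(1) by metis
  have Fw1: "bform M w (root s) = 2 * al - 2 * ?c * be"
    unfolding w_def F_lin[OF fs_root fs_root] F_root gts by simp
  have Fw2: "bform M w (root t) = 2 * be - 2 * ?c * al"
    unfolding w_def F_lin[OF fs_root fs_root] F_root gst' by simp
  have "bform M v' (root s) = fs' - (2 * al - 2 * ?c * be)"
    unfolding v'_def F_lin[OF assms(3) fsw] Fw1 fs'_def by simp
  also have "\<dots> = 0"
  proof -
    have e: "2 * al - 2 * ?c * be = ((fs' + ?c*ft) - ?c*(ft + ?c*fs'))/d"
      unfolding al_def be_def using d by (simp add: field_simps)
    have "(fs' + ?c*ft) - ?c*(ft + ?c*fs') = fs' * d" unfolding d_def by (simp add: algebra_simps)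
    then show ?thesis using e d by simp
  qed
  finally have F1: "bform M v' (root s) = 0" .
  have "bform M v' (root t) = ft - (2 * be - 2 * ?c * al)"
    unfolding v'_def F_lin[OF assms(3) fsw] Fw2 ft_def by simp
  also have "\<dots> = 0"
  proof -
    have e: "2 * be - 2 * ?c * al = ((ft + ?c*fs') - ?c*(fs' + ?c*ft))/d"
      unfolding al_def be_def using d by (simp add: field_simps)
    have "(ft + ?c*fs') - ?c*(fs' + ?c*ft) = ft * d" unfolding d_def by (simp add: algebra_simps)
    then show ?thesis using e d by simp
  qed
  finally have F2: "bform M v' (root t) = 0" .
  have v: "v = (\<lambda>x. 1 * v' x + 1 * w x)" unfolding v'_def by simp
  have bt: "act (alt_R t s m) (root t) = act (alt_R s t m) (root t)"
    using braid_root[of t s m] assms(1,2) Msym by metis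
  have "act (alt_R t s m) v = (\<lambda>x. 1 * v' x + 1 * act (alt_R t s m) w x)"
    apply (subst v) apply (subst act_lin[OF fsv' fsw])
    using fixed_act[OF F1 F2 set_alt_R[of t s m]] by (simp add: insert_commute)
  also have "\<dots> = (\<lambda>x. 1 * v' x + 1 * act (alt_R s t m) w x)"
    unfolding w_def act_lin[OF fs_root fs_root] braid_root[OF assms(1,2)] bt ..
  also have "\<dots> = act (alt_R s t m) v"
    apply (subst v) apply (subst act_lin[OF fsv' fsw])
    using fixed_act[OF F1 F2, of "alt_R s t m"] set_alt_R[of s t m] by (simp add: insert_commute)
  finally show ?thesis .
qed

end



inductive ceq :: "('a \<Rightarrow> 'a \<Rightarrow> enat) \<Rightarrow> 'a list \<Rightarrow> 'a list \<Rightarrow> bool" for M where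
  c_refl: "ceq M w w"
| c_sym: "ceq M w w' \<Longrightarrow> ceq M w' w"
| c_trans: "ceq M w w' \<Longrightarrow> ceq M w' w'' \<Longrightarrow> ceq M w w''"
| c_braid: "s \<noteq> t \<Longrightarrow> M s t = enat k \<Longrightarrow> ceq M (p @ alt_R t s k @ q) (p @ alt_R s t k @ q)"
| c_cancel: "ceq M (p @ [x, x] @ q) (p @ q)"

lemma ceq_cong: "ceq M a b \<Longrightarrow> ceq M (u @ a @ v) (u @ b @ v)"
proof (induction arbitrary: u v rule: ceq.induct)
  case (c_refl w) then show ?case by (rule ceq.c_refl)
next
  case (c_sym w w') then show ?case by (blast intro: ceq.c_sym)
next
  case (c_trans w w' w'') then show ?case by (blast intro: ceq.c_trans)
next
  case (c_braid s t k p q)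
  from c_braid(1,2) have "ceq M ((u @ p) @ alt_R t s k @ (q @ v)) ((u @ p) @ alt_R s t k @ (q @ v))"
    by (rule ceq.c_braid)
  then show ?case by simp
next
  case (c_cancel p x q)
  from ceq.c_cancel[of M "u @ p" x "q @ v"] show ?case by simp
qed

lemma ceq_app: "ceq M a b \<Longrightarrow> ceq M c d \<Longrightarrow> ceq M (a @ c) (b @ d)"
proof -
  assume 1: "ceq M a b" and 2: "ceq M c d"
  have "ceq M ([] @ a @ c) ([] @ b @ c)" using ceq_cong[OF 1] .
  moreover have "ceq M (b @ c @ []) (b @ d @ [])" using ceq_cong[OF 2] .
  ultimately show ?thesis by (auto intro: ceq.c_trans)
qed

lemma ceq_cancel2: "ceq M (p @ [x, x]) p"
  using ceq.c_cancel[of M p x "[]"] by simp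

lemma iotaW_append[simp]: "iotaW (a @ b) = iotaW a @ iotaW b"
  by (simp add: iotaW_def pos_def)

lemma iotaW_Nil[simp]: "iotaW [] = []" by (simp add: iotaW_def pos_def)

lemma pos_append[simp]: "pos (a @ b) = pos a @ pos b" by (simp add: pos_def)
lemma pos_Cons: "pos (x # a) = (x, True) # pos a" by (simp add: pos_def)

lemma iotaW_alt: "iotaW (alt_R b a k) = pos (alt_R (Tau b) (Tau a) k)"
  by (simp add: iotaW_def map_alt_R)

lemma ceq_va: "ceq M x y \<Longrightarrow> va_eq M (iotaW x) (iotaW y)"
  unfolding va_eq_def
proof (induction rule: ceq.induct)
  case (c_refl w) then show ?case by (rule pres_eq.pres_refl)
next
  case (c_sym w w') then show ?case by (blast intro: pres_eq.pres_sym)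
next
  case (c_trans w w' w'') then show ?case by (blast intro: pres_eq.pres_trans)
next
  case (c_braid s t k p q)
  have "(pos (alt_R (Tau t) (Tau s) k), pos (alt_R (Tau s) (Tau t) k)) \<in> va_rels M"
    using c_braid unfolding va_rels_def by blast
  from pres_eq.pres_rel[OF this, of "iotaW p" "iotaW q"] show ?case by (simp add: iotaW_alt)
next
  case (c_cancel p x q)
  have "(pos [Tau x, Tau x], []) \<in> va_rels M"
    unfolding va_rels_def by blast
  from pres_eq.pres_rel[OF this, of "iotaW p" "iotaW q"] show ?case
    by (simp add: iotaW_def pos_def)
qed

lemma wconj_wc: "wconj u g = wc (iotaW u) g"
  by (simp add: wconj_def wc_def)

lemma wconj_app: "wconj (x @ y) g = wconj x (wconj y g)"
  by (simp add: wconj_wc wc_app)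

lemma wconj_Nil[simp]: "wconj [] g = g"
  by (simp add: wconj_def)

lemma wconj_cong: "va_eq M (iotaW x) (iotaW y) \<Longrightarrow> va_eq M g g' \<Longrightarrow> va_eq M (wconj x g) (wconj y g')"
  unfolding wconj_wc va_eq_def by (rule wc_cong)

lemma va_trans: "va_eq M a b \<Longrightarrow> va_eq M b c \<Longrightarrow> va_eq M a c"
  unfolding va_eq_def by (rule pres_eq.pres_trans)

lemma va_sym: "va_eq M a b \<Longrightarrow> va_eq M b a"
  unfolding va_eq_def by (rule pres_eq.pres_sym)

lemma va_refl: "va_eq M a a"
  unfolding va_eq_def by (rule pres_eq.pres_refl)

lemma Pi_va:
  assumes "s \<noteq> t" "M s t = enat m" "2 \<le> m"
  shows "va_eq M (wconj (alt_R s t (m - 1)) (pos [Tau s])) (pos [Tau (if even m then s else t)])"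
    and "va_eq M (wconj (alt_R s t (m - 1)) (pos [Sig s])) (pos [Sig (if even m then s else t)])"
proof -
  let ?r = "if even m then s else t"
  let ?P = "alt_R (Tau s) (Tau t) (m - 1)"
  have sm: "Suc (m - 1) = m" using assms(3) by simp
  have ev: "(if even (m - 1) then Tau t else Tau s) = Tau ?r" using assms(3) by auto
  have "(pos (alt_R (Tau t) (Tau s) m), pos (alt_R (Tau s) (Tau t) m)) \<in> va_rels M"
    using assms(1,2) unfolding va_rels_def by blast
  from pres_eq.pres_rel[OF this, of "[]" "[]"]
  have "pres_eq (va_rels M) (pos (alt_R (Tau t) (Tau s) (Suc (m - 1)))) (pos (alt_R (Tau s) (Tau t) (Suc (m - 1))))"
    using sm by simp
  moreover have e1: "alt_R (Tau t) (Tau s) (Suc (m - 1)) = ?P @ [Tau s]" by (rule alt_R_snoc)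
  moreover have "alt_R (Tau s) (Tau t) (Suc (m - 1)) = (if even (m - 1) then Tau t else Tau s) # ?P"
    by (rule alt_R_Suc)
  then have e2: "alt_R (Tau s) (Tau t) (Suc (m - 1)) = Tau ?r # ?P" unfolding ev .
  ultimately have "pres_eq (va_rels M) (pos ?P @ pos [Tau s]) (pos [Tau ?r] @ pos ?P)"
    by (simp only: pos_append pos_Cons e2) (simp add: pos_def)
  then show "va_eq M (wconj (alt_R s t (m - 1)) (pos [Tau s])) (pos [Tau ?r])"
    unfolding wconj_wc iotaW_alt va_eq_def by (rule wc_comm)
  have "(pos (?P @ [Sig s]), pos (Sig ?r # ?P)) \<in> va_rels M"
    using assms(1,2) unfolding va_rels_def by blast
  from pres_eq.pres_rel[OF this, of "[]" "[]"]
  have "pres_eq (va_rels M) (pos ?P @ pos [Sig s]) (pos [Sig ?r] @ pos ?P)"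
    by (simp add: pos_def)
  then show "va_eq M (wconj (alt_R s t (m - 1)) (pos [Sig s])) (pos [Sig ?r])"
    unfolding wconj_wc iotaW_alt va_eq_def by (rule wc_comm)
qed

lemma iotaW_rev_cancel: "va_eq M (iotaW (v @ rev v @ u)) (iotaW u)"
proof (induction v)
  case Nil then show ?case by (simp add: va_refl)
next
  case (Cons x v)
  have "ceq M ([x] @ (v @ rev v) @ [x]) ([x] @ [] @ [x])"
  proof (rule ceq_cong)
    show "ceq M (v @ rev v) []"
    proof (induction v)
      case Nil then show ?case by (simp add: c_refl)
    next
      case (Cons y v)
      have "ceq M ([y] @ (v @ rev v) @ [y]) ([y] @ [] @ [y])" by (rule ceq_cong[OF Cons])
      moreover have "ceq M ([] @ [y, y] @ []) ([] @ [])" by (rule c_cancel)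
      ultimately show ?case by (auto intro: c_trans)
    qed
  qed
  moreover have "ceq M ([] @ [x, x] @ []) ([] @ [])" by (rule c_cancel)
  ultimately have "ceq M (x # v @ rev v @ [x]) []" by (auto intro: c_trans)
  then have "ceq M ((x # v @ rev v @ [x]) @ u) ([] @ u)" by (rule ceq_app) (rule c_refl)
  then show ?case using ceq_va by fastforce
qed

context cox
begin

lemma act_ceq: "ceq M x y \<Longrightarrow> fs v \<Longrightarrow> act x v = act y v"
proof (induction rule: ceq.induct)
  case (c_braid s t k p q)
  then show ?case using braid_lin[OF c_braid(1,2), of "act q v"] by simp
next
  case (c_cancel p x q)
  then show ?case by (simp add: refl_invol)
qed auto

definition len :: "'a list \<Rightarrow> nat" where
  "len w = (LEAST n. \<exists>y. ceq M y w \<and> length y = n)"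

lemma len_ex: "\<exists>y. ceq M y w \<and> length y = len w"
  unfolding len_def by (rule LeastI_ex) (use c_refl in blast)

lemma len_le: "ceq M y w \<Longrightarrow> len w \<le> length y"
  unfolding len_def by (rule Least_le) blast

lemma len_ceq: "ceq M a b \<Longrightarrow> len a = len b"
proof -
  assume ab: "ceq M a b"
  obtain y where y: "ceq M y a" "length y = len a" using len_ex by blast
  obtain z where z: "ceq M z b" "length z = len b" using len_ex by blast
  have "len b \<le> len a" using len_le[of y b] y ab by (auto intro: c_trans)
  moreover have "len a \<le> len b" using len_le[of z a] z ab by (auto intro: c_trans c_sym)
  ultimately show ?thesis by simp
qed

lemma len_app_le: "ceq M y' y \<Longrightarrow> len (v @ y) \<le> len v + length y'"
proof -
  assume h: "ceq M y' y"
  obtain v' where v': "ceq M v' v" "length v' = len v" using len_ex by blast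
  have "ceq M (v' @ y') (v @ y)" by (rule ceq_app[OF v'(1) h])
  then show ?thesis using len_le v' by fastforce
qed

lemma len_snoc_le: "len (v @ [x]) \<le> Suc (len v)"
  using len_app_le[OF c_refl, of v "[x]"] by simp

definition lenI :: "'a set \<Rightarrow> 'a list \<Rightarrow> nat" where
  "lenI I w = (LEAST n. \<exists>y. set y \<subseteq> I \<and> ceq M y w \<and> length y = n)"

lemma lenI_ex: "set w \<subseteq> I \<Longrightarrow> \<exists>y. set y \<subseteq> I \<and> ceq M y w \<and> length y = lenI I w"
  unfolding lenI_def by (rule LeastI_ex) (use c_refl in blast)

lemma lenI_le: "set y \<subseteq> I \<Longrightarrow> ceq M y w \<Longrightarrow> lenI I w \<le> length y"
  unfolding lenI_def by (rule Least_le) blast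

lemma len_lenI: "set y \<subseteq> I \<Longrightarrow> len (v @ y) \<le> len v + lenI I y"
  using lenI_ex[of y I] len_app_le by fastforce

end



definition altp :: "'x list \<Rightarrow> bool" where
  "altp z \<longleftrightarrow> (\<forall>i. Suc i < length z \<longrightarrow> z ! i \<noteq> z ! Suc i)"

lemma nonalt_split:
  assumes "\<not> altp z"
  shows "\<exists>p x q. z = p @ [x, x] @ q"
proof -
  obtain i where i: "Suc i < length z" "z ! i = z ! Suc i" using assms by (auto simp: altp_def)
  have "z = take i z @ drop i z" by simp
  also have "drop i z = z ! i # z ! Suc i # drop (Suc (Suc i)) z"
    using i(1) by (metis Cons_nth_drop_Suc Suc_lessD)
  finally have "z = take i z @ [z ! i, z ! i] @ drop (Suc (Suc i)) z" using i(2) by simp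
  then show ?thesis by blast
qed

lemma altp_drop: "altp z \<Longrightarrow> altp (drop j z)"
  unfolding altp_def by auto

lemma set_drop_sub: "set z \<subseteq> A \<Longrightarrow> set (drop j z) \<subseteq> A"
  by (meson set_drop_subset subset_trans)

lemma set_take_sub: "set z \<subseteq> A \<Longrightarrow> set (take j z) \<subseteq> A"
  by (meson set_take_subset subset_trans)

lemma alt_suffix:
  assumes "set z \<subseteq> {a, b}" "a \<noteq> b" "altp z" "z \<noteq> []" "last z = b" "j \<le> length z" "0 < j"
  shows "z = take (length z - j) z @ alt_R a b j"
proof -
  let ?d = "drop (length z - j) z"
  have ne: "?d \<noteq> []" using assms(6,7) by simp
  have "last ?d = b" using assms(5,6,7) by (simp add: last_drop)
  moreover have "length ?d = j" using assms(6) by simp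
  ultimately have "?d = alt_R a b j"
    using alt_char[OF set_drop_sub[OF assms(1)] assms(2) _ ne] altp_drop[OF assms(3)]
    unfolding altp_def by metis
  then show ?thesis by (metis append_take_drop_id)
qed

lemma enat_cases_le:
  obtains m where "M = enat m" "m \<le> k" | "enat k < M"
proof (cases M)
  case (enat m)
  then show thesis using that by (cases "m \<le> k") auto
next
  case infinity
  then show thesis using that by simp
qed

context cox
begin

definition nonneg :: "('a \<Rightarrow> real) \<Rightarrow> bool" where "nonneg v \<longleftrightarrow> (\<forall>x. 0 \<le> v x)"

lemma dpos:
  assumes st: "s \<noteq> t" and yI: "set y \<subseteq> {s, t}" and le: "lenI {s, t} y \<le> lenI {s, t} (y @ [s])"
  shows "\<exists>p q. 0 \<le> p \<and> 0 \<le> q \<and> act y (root s) = (\<lambda>x. p * root s x + q * root t x)"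
proof -
  let ?I = "{s, t}"
  obtain y' where y': "set y' \<subseteq> ?I" "ceq M y' y" "length y' = lenI ?I y"
    using lenI_ex[OF yI] by blast
  have acty: "act y (root s) = act y' (root s)" using act_ceq[OF y'(2)] by simp
  have ys: "ceq M (y' @ [s]) (y @ [s])" by (rule ceq_app[OF y'(2) c_refl])
  have alt: "altp y'"
  proof (rule ccontr)
    assume "\<not> altp y'"
    then obtain p x q where pxq: "y' = p @ [x, x] @ q" using nonalt_split by blast
    have "ceq M (p @ q) y" using c_cancel[of M p x q] pxq y'(2) by (metis c_sym c_trans)
    moreover have "set (p @ q) \<subseteq> ?I" using y'(1) pxq by auto
    ultimately have "lenI ?I y \<le> length (p @ q)" by (rule lenI_le[rotated])
    then show False using y'(3) pxq by simp
  qed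
  show ?thesis
  proof (cases "y' = []")
    case True
    then show ?thesis using acty by (intro exI[of _ 1] exI[of _ 0]) auto
  next
    case False
    have lastI: "last y' \<in> ?I" using False y'(1) last_in_set by blast
    show ?thesis
    proof (cases "last y' = s")
      case True
      have "y' = butlast y' @ [s]" using False True by (metis append_butlast_last_id)
      then have "ceq M (butlast y' @ [s, s]) (y @ [s])" using ys by (metis append.assoc append_Cons append_Nil)
      then have "ceq M (butlast y') (y @ [s])" using ceq_cancel2 by (metis c_sym c_trans)
      moreover have "set (butlast y') \<subseteq> ?I" using y'(1) by (meson in_set_butlastD subset_iff)
      ultimately have "lenI ?I (y @ [s]) \<le> length (butlast y')" by (rule lenI_le[rotated])
      moreover have "0 < length y'" using False by simp
      ultimately show ?thesis using le y'(3) by simp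
    next
      case False2: False
      then have lt: "last y' = t" using lastI by auto
      let ?k = "length y'"
      have yalt: "y' = alt_R s t ?k" using alt_char[OF y'(1) st _ False lt] alt unfolding altp_def by blast
      show ?thesis
      proof (cases rule: enat_cases_le[of "M s t" ?k])
        case (1 m)
        have m2: "2 \<le> m" using fin_m[OF st 1(1)] .
        have split: "y' = take (?k - m) y' @ alt_R s t m"
          using alt_suffix[OF y'(1) st alt False lt] 1 m2 by simp
        have "ceq M (take (?k - m) y' @ alt_R s t m @ []) (take (?k - m) y' @ alt_R t s m @ [])"
          by (rule c_sym, rule c_braid[where M=M, OF st 1(1)])
        then have "ceq M y' (take (?k - m) y' @ alt_R s t (m - 1) @ [s])"
          using split alt_R_snoc[of t s "m - 1"] m2 by (simp add: Suc_diff_Suc numeral_2_eq_2)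
        then have "ceq M (y' @ [s]) ((take (?k - m) y' @ alt_R s t (m - 1)) @ [s, s])"
          by (metis append.assoc append_Cons append_Nil ceq_app c_refl)
        then have "ceq M (take (?k - m) y' @ alt_R s t (m - 1)) (y @ [s])"
          using ceq_cancel2 ys by (metis c_sym c_trans)
        moreover have "set (take (?k - m) y' @ alt_R s t (m - 1)) \<subseteq> ?I"
          using set_take_sub[OF y'(1)] set_alt_R[of s t "m - 1"] by auto
        ultimately have "lenI ?I (y @ [s]) \<le> length (take (?k - m) y' @ alt_R s t (m - 1))"
          by (rule lenI_le[rotated])
        then show ?thesis using le y'(3) 1 m2 by simp
      next
        case 2
        have u1: "0 \<le> U (ccoef M s t) (Suc ?k)"
          using U_nonneg[OF st] 2 by (simp add: Suc_ile_eq)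
        have u0: "0 \<le> U (ccoef M s t) ?k"
          using U_nonneg[OF st] 2 by (simp add: order_less_imp_le)
        have r: "act y (root s) = (\<lambda>x. U (ccoef M s t) (Suc ?k) * root (if even ?k then s else t) x
           + U (ccoef M s t) ?k * root (if even ?k then t else s) x)"
          using acty rho[OF st, of ?k] yalt by metis
        show ?thesis
        proof (cases "even ?k")
          case True
          then show ?thesis using r u1 u0 by (intro exI[of _ "U (ccoef M s t) (Suc ?k)"] exI[of _ "U (ccoef M s t) ?k"]) auto
        next
          case False
          then show ?thesis using r u1 u0 by (intro exI[of _ "U (ccoef M s t) ?k"] exI[of _ "U (ccoef M s t) (Suc ?k)"]) (auto simp: add.commute)
        qed
      qed
    qed
  qed
qed

end



context cox
begin

lemma lenI_cons: "set y \<subseteq> I \<Longrightarrow> x \<in> I \<Longrightarrow> lenI I (x # y) \<le> Suc (lenI I y)"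
proof -
  assume yI: "set y \<subseteq> I" and xI: "x \<in> I"
  obtain y' where y': "set y' \<subseteq> I" "ceq M y' y" "length y' = lenI I y" using lenI_ex[OF yI] by blast
  have "ceq M ([x] @ y') ([x] @ y)" by (rule ceq_app[OF c_refl y'(2)])
  then have "lenI I (x # y) \<le> length (x # y')" using lenI_le[of "x # y'" I "x # y"] y'(1) xI by simp
  then show ?thesis using y'(3) by simp
qed

lemma pos_thm: "len w \<le> len (w @ [s]) \<Longrightarrow> nonneg (act w (root s))"
proof (induction "len w" arbitrary: w s rule: less_induct)
  case less
  define n where "n = len w"
  obtain w0 where w0: "ceq M w0 w" "length w0 = n" using len_ex n_def by blast
  show ?case
  proof (cases "w0 = []")
    case True
    then have "act w (root s) = root s" using act_ceq[OF w0(1), of "root s"] by simp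
    then show ?thesis by (simp add: nonneg_def root_def)
  next
    case False
    define w1 where "w1 = butlast w0"
    define t where "t = last w0"
    have w0e: "w0 = w1 @ [t]" using False by (simp add: w1_def t_def)
    have ww1: "ceq M (w1 @ [t]) w" using w0 w0e by simp
    have lw: "n \<le> Suc (len w1)" using len_snoc_le[of w1 t] len_ceq[OF ww1] n_def by simp
    have lw1: "len w1 \<le> n - 1" using len_le[OF c_refl, of w1] w0 w0e by simp
    have n0: "0 < n" using w0(2) False by (metis length_greater_0_conv)
    have ts: "t \<noteq> s"
    proof
      assume "t = s"
      then have "ceq M (w1 @ [s, s]) (w @ [s])" using ceq_app[OF ww1 c_refl, of "[s]"] by simp
      then have "ceq M w1 (w @ [s])" using ceq_cancel2 by (metis c_sym c_trans)
      then have "len (w @ [s]) = len w1" using len_ceq by simp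
      then show False using less.prems n_def lw1 n0 by simp
    qed
    let ?I = "{s, t}"
    define Cand where "Cand = (\<lambda>(v, y). set y \<subseteq> ?I \<and> ceq M (v @ y) w \<and> len v + lenI ?I y = n)"
    have LB: "n \<le> len v + lenI ?I y" if "set y \<subseteq> ?I" "ceq M (v @ y) w" for v y
      using len_lenI[OF that(1), of v] len_ceq[OF that(2)] n_def by simp
    have "lenI ?I [t] \<le> 1" using lenI_le[OF _ c_refl, of "[t]" ?I] by simp
    then have "Cand (w1, [t])" using LB[of "[t]" w1] ww1 lw1 n0 unfolding Cand_def by auto
    then obtain vy where vy: "Cand vy" "\<forall>z. Cand z \<longrightarrow> len (fst vy) \<le> len (fst z)"
      using ex_has_least_nat[of Cand "(w1, [t])" "\<lambda>z. len (fst z)"] by blast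
    obtain v y where vye: "vy = (v, y)" by (cases vy)
    have C: "set y \<subseteq> ?I" "ceq M (v @ y) w" "len v + lenI ?I y = n" using vy(1) vye by (auto simp: Cand_def)
    have minv: "\<And>v' y'. Cand (v', y') \<Longrightarrow> len v \<le> len v'" using vy(2) vye by fastforce
    have lv: "len v < n" using minv[OF \<open>Cand (w1, [t])\<close>] lw1 n0 by simp
    have gen: "len v \<le> len (v @ [x])" if xI: "x \<in> ?I" for x
    proof (rule ccontr)
      assume "\<not> len v \<le> len (v @ [x])"
      then have lt: "len (v @ [x]) < len v" by simp
      have c1: "ceq M ((v @ [x]) @ (x # y)) w"
      proof -
        have "ceq M (v @ [x, x] @ y) (v @ y)" by (rule c_cancel)
        then show ?thesis using C(2) by (simp, metis c_trans)
      qed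
      have s1: "set (x # y) \<subseteq> ?I" using C(1) xI by simp
      have "lenI ?I (x # y) \<le> Suc (lenI ?I y)" by (rule lenI_cons[OF C(1) xI])
      then have "len (v @ [x]) + lenI ?I (x # y) \<le> n" using lt C(3) by simp
      with LB[OF s1 c1] have "Cand (v @ [x], x # y)" using s1 c1 unfolding Cand_def by auto
      then show False using minv lt by fastforce
    qed
    have pvs: "nonneg (act v (root s))" using less.hyps[OF lv[unfolded n_def]] gen[of s] by simp
    have pvt: "nonneg (act v (root t))" using less.hyps[OF lv[unfolded n_def]] gen[of t] by simp
    have lyI: "lenI ?I y \<le> lenI ?I (y @ [s])"
    proof (rule ccontr)
      assume "\<not> ?thesis"
      then have lt: "lenI ?I (y @ [s]) < lenI ?I y" by simp
      have "ceq M (v @ (y @ [s])) (w @ [s])" using ceq_app[OF C(2) c_refl, of "[s]"] by simp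
      then have "len (w @ [s]) \<le> len v + lenI ?I (y @ [s])"
        using len_lenI[of "y @ [s]" ?I v] len_ceq C(1) by fastforce
      then show False using lt C(3) less.prems n_def by simp
    qed
    obtain p q where pq: "0 \<le> p" "0 \<le> q" "act y (root s) = (\<lambda>x. p * root s x + q * root t x)"
      using dpos[OF ts[symmetric] C(1) lyI] by blast
    have "act w (root s) = act (v @ y) (root s)" using act_ceq[OF C(2), of "root s"] by simp
    also have "\<dots> = (\<lambda>x. p * act v (root s) x + q * act v (root t) x)"
      using pq(3) by (simp add: act_lin)
    finally show ?thesis using pq pvs pvt by (simp add: nonneg_def)
  qed
qed

lemma root_sign: "nonneg (act y (root s)) \<or> nonneg (\<lambda>x. - act y (root s) x)"
proof (cases "len y \<le> len (y @ [s])")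
  case True then show ?thesis using pos_thm by blast
next
  case False
  have "ceq M ((y @ [s]) @ [s]) y" using ceq_cancel2[of M y s] by simp
  then have "len (y @ [s]) \<le> len ((y @ [s]) @ [s])" using False len_ceq by fastforce
  then have "nonneg (act (y @ [s]) (root s))" by (rule pos_thm)
  then show ?thesis by (simp add: refl_root act_neg)
qed

end



lemma comb:
  assumes "ceq M z (z2 @ P)"
    and "va_eq M (wconj P (pos [Tau a])) (pos [Tau r])" "va_eq M (wconj P (pos [Sig a])) (pos [Sig r])"
    and "va_eq M (wconj z2 (pos [Tau r])) (pos [Tau c])" "va_eq M (wconj z2 (pos [Sig r])) (pos [Sig c])"
  shows "va_eq M (wconj z (pos [Tau a])) (pos [Tau c]) \<and> va_eq M (wconj z (pos [Sig a])) (pos [Sig c])"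
proof -
  have e: "va_eq M (wconj z g) (wconj z2 (wconj P g))" for g
    using wconj_cong[OF ceq_va[OF assms(1)] va_refl] by (simp add: wconj_app)
  show ?thesis
    using e[of "pos [Tau a]"] e[of "pos [Sig a]"]
      wconj_cong[OF va_refl assms(2), of z2] wconj_cong[OF va_refl assms(3), of z2] assms(4,5)
    by (meson va_trans)
qed

context cox
begin

lemma supp_act:
  assumes "set y \<subseteq> {a, b}" "fs v" "\<forall>z. z \<notin> {a, b} \<longrightarrow> v z = 0"
  shows "\<forall>z. z \<notin> {a, b} \<longrightarrow> act y v z = 0"
  using assms(1)
proof (induction y)
  case Nil then show ?case using assms(3) by simp
next
  case (Cons x y)
  then show ?case by (auto simp: refl_act_def root_def)
qed

lemma dih:
  assumes "a \<noteq> b" "set z \<subseteq> {a, b}" "act z (root a) = (\<lambda>x. lam * root c x)" "0 < lam"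
  shows "lam = 1 \<and> va_eq M (wconj z (pos [Tau a])) (pos [Tau c]) \<and> va_eq M (wconj z (pos [Sig a])) (pos [Sig c])"
  using assms
proof (induction "length z" arbitrary: z a b c lam rule: less_induct)
  case less
  note ab = less.prems(1) and zI = less.prems(2) and az = less.prems(3) and lam0 = less.prems(4)
  show ?case
  proof (cases "altp z")
    case False
    then obtain p x q where pxq: "z = p @ [x, x] @ q" using nonalt_split by blast
    have cz: "ceq M z (p @ q)" using pxq c_cancel by metis
    have "act (p @ q) (root a) = (\<lambda>x. lam * root c x)" using az act_ceq[OF cz, of "root a"] by simp
    moreover have "set (p @ q) \<subseteq> {a, b}" using zI pxq by auto
    moreover have "length (p @ q) < length z" using pxq by simp
    ultimately have IH: "lam = 1 \<and> va_eq M (wconj (p @ q) (pos [Tau a])) (pos [Tau c]) \<and>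
        va_eq M (wconj (p @ q) (pos [Sig a])) (pos [Sig c])"
      using less.hyps ab lam0 by blast
    have "ceq M z ((p @ q) @ [])" using cz by simp
    from comb[OF this, of a a c] IH show ?thesis by (simp add: va_refl)
  next
    case alt: True
    show ?thesis
    proof (cases "z = []")
      case True
      then have "root a a = lam * root c a" using az by (metis act_Nil)
      then have "c = a" "lam = 1" by (auto simp: root_def split: if_splits)
      then show ?thesis using True by (simp add: va_refl)
    next
      case ne: False
      have lastI: "last z \<in> {a, b}" using ne zI last_in_set by blast
      define k where "k = length z"
      have k0: "0 < k" using ne k_def by simp
      show ?thesis
      proof (cases "last z = a")
        case la: True
        have zb: "set z \<subseteq> {b, a}" using zI by auto
        have zalt: "z = alt_R b a k" using alt_char[OF zb ab[symmetric] _ ne la] alt unfolding altp_def k_def by blast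
        show ?thesis
        proof (cases rule: enat_cases_le[of "M a b" k])
          case (1 m)
          have m2: "2 \<le> m" using fin_m[OF ab 1(1)] .
          let ?r = "if even m then a else b"
          let ?o = "if even m then b else a"
          define z2 where "z2 = take (k - m) z @ [?r]"
          have split: "z = take (k - m) z @ alt_R b a m"
            using alt_suffix[OF zb ab[symmetric] alt ne la, of m] 1 m2 k_def by simp
          have "ceq M (take (k - m) z @ alt_R b a m @ []) (take (k - m) z @ alt_R a b m @ [])"
            by (rule c_braid[where M=M, OF ab 1(1)])
          moreover have "alt_R a b m = ?r # alt_R a b (m - 1)"
          proof -
            have sm: "Suc (m - 1) = m" using m2 by simp
            have par: "even (m - 1) \<longleftrightarrow> odd m" using m2 by (cases m) auto
            have "alt_R a b m = (if even (m - 1) then b else a) # alt_R a b (m - 1)"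
              by (metis alt_R_Suc sm)
            then show ?thesis using par by simp
          qed
          ultimately have cz: "ceq M z (z2 @ alt_R a b (m - 1))"
            using split unfolding z2_def by simp
          have "act z2 (root ?r) = (\<lambda>x. lam * root c x)"
            using az act_ceq[OF cz, of "root a"] Pi_act[OF ab 1(1)] by simp
          moreover have "set z2 \<subseteq> {?r, ?o}" using set_take_sub[OF zI] unfolding z2_def by auto
          moreover have "length z2 < length z" using m2 1 k_def unfolding z2_def by simp
          moreover have "?r \<noteq> ?o" using ab by auto
          ultimately have IH: "lam = 1 \<and> va_eq M (wconj z2 (pos [Tau ?r])) (pos [Tau c]) \<and>
              va_eq M (wconj z2 (pos [Sig ?r])) (pos [Sig c])"
            using less.hyps lam0 by blast
          show ?thesis using comb[OF cz Pi_va[where M=M, OF ab 1(1) m2]] IH by simp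
        next
          case 2
          have km: "Suc (k - 1) = k" using k0 by simp
          define kk where "kk = k - 1"
          have zeq: "z = alt_R a b kk @ [a]" using zalt alt_R_snoc[of b a "k - 1"] km unfolding kk_def by simp
          have "act (alt_R a b kk @ [a]) (root a) = act (alt_R a b kk) (\<lambda>x. - root a x)"
            by (simp add: refl_root)
          then have "act z (root a) = act (alt_R a b (k - 1)) (\<lambda>x. - root a x)"
            using zeq kk_def by simp
          also have "\<dots> = (\<lambda>x. - (U (ccoef M a b) k * root (if even (k - 1) then a else b) x
              + U (ccoef M a b) (k - 1) * root (if even (k - 1) then b else a) x))"
            using rho[OF ab, of "k - 1"] km by (simp add: act_neg)
          finally have e: "act z (root a) (if even (k - 1) then a else b) = - U (ccoef M a b) k"
            using ab by (simp add: root_def)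
          have "0 < U (ccoef M a b) k" using U_pos[OF ab k0 2] .
          moreover have "0 \<le> lam * root c (if even (k - 1) then a else b)"
            using lam0 by (simp add: root_def)
          ultimately show ?thesis using e az by (metis neg_less_0_iff_less not_le)
        qed
      next
        case lb: False
        then have lb: "last z = b" using lastI by auto
        have zalt: "z = alt_R a b k" using alt_char[OF zI ab _ ne lb] alt unfolding altp_def k_def by blast
        show ?thesis
        proof (cases rule: enat_cases_le[of "M a b" "Suc k"])
          case (1 m)
          have m2: "2 \<le> m" using fin_m[OF ab 1(1)] .
          let ?r = "if even m then a else b"
          let ?o = "if even m then b else a"
          define z2 where "z2 = take (k - (m - 1)) z"
          have split: "z = z2 @ alt_R a b (m - 1)"
            using alt_suffix[OF zI ab alt ne lb, of "m - 1"] 1 m2 k_def unfolding z2_def by simp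
          then have cz: "ceq M z (z2 @ alt_R a b (m - 1))" by (simp add: c_refl)
          have "act z2 (root ?r) = (\<lambda>x. lam * root c x)"
            using az act_ceq[OF cz, of "root a"] Pi_act[OF ab 1(1)] by simp
          moreover have "set z2 \<subseteq> {?r, ?o}" using set_take_sub[OF zI] unfolding z2_def by auto
          moreover have "length z2 < length z" using m2 1 k_def unfolding z2_def by simp
          moreover have "?r \<noteq> ?o" using ab by auto
          ultimately have IH: "lam = 1 \<and> va_eq M (wconj z2 (pos [Tau ?r])) (pos [Tau c]) \<and>
              va_eq M (wconj z2 (pos [Sig ?r])) (pos [Sig c])"
            using less.hyps lam0 by blast
          show ?thesis using comb[OF cz Pi_va[where M=M, OF ab 1(1) m2]] IH by simp
        next
          case 2
          let ?x0 = "if even k then a else b"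
          let ?x1 = "if even k then b else a"
          have r: "act z (root a) = (\<lambda>x. U (ccoef M a b) (Suc k) * root ?x0 x + U (ccoef M a b) k * root ?x1 x)"
            using rho[OF ab, of k] zalt by metis
          have x01: "?x0 \<noteq> ?x1" using ab by auto
          have "0 < U (ccoef M a b) (Suc k)" using U_pos[OF ab _ 2] by simp
          then have "act z (root a) ?x0 \<noteq> 0" using r x01 by (simp add: root_def)
          then have c0: "c = ?x0" using az by (auto simp: root_def split: if_splits)
          have "enat k < M a b" using 2 by (meson Suc_ile_eq order_less_imp_le)
          then have "0 < U (ccoef M a b) k" using U_pos[OF ab k0] by simp
          then have "act z (root a) ?x1 \<noteq> 0" using r x01 by (simp add: root_def)
          then have "c = ?x1" using az by (auto simp: root_def split: if_splits)
          then show ?thesis using c0 x01 by simp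
        qed
      qed
    qed
  qed
qed

end



context cox
begin

lemma main:
  "act w (root s) = root t \<Longrightarrow>
   va_eq M (wconj w (pos [Tau s])) (pos [Tau t]) \<and> va_eq M (wconj w (pos [Sig s])) (pos [Sig t])"
proof (induction "len w" arbitrary: w s t rule: less_induct)
  case less
  define n where "n = len w"
  obtain w0 where w0: "ceq M w0 w" "length w0 = n" using len_ex n_def by blast
  have cw0: "ceq M w (w0 @ [])" using w0(1) c_sym by simp
  show ?case
  proof (cases "w0 = []")
    case True
    then have "act w (root s) = root s" using act_ceq[OF w0(1), of "root s"] by simp
    then have "root s = root t" using less.prems by simp
    then have "root s s = root t s" by simp
    then have st: "s = t" by (simp add: root_def split: if_splits)
    show ?thesis using comb[OF cw0, of s s t] True st by (simp add: va_refl)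
  next
    case False
    define w1 where "w1 = butlast w0"
    define r where "r = last w0"
    have w0e: "w0 = w1 @ [r]" using False by (simp add: w1_def r_def)
    have ww1: "ceq M (w1 @ [r]) w" using w0 w0e by simp
    have lw1: "len w1 \<le> n - 1" using len_le[OF c_refl, of w1] w0 w0e by simp
    have n0: "0 < n" using w0(2) False by (metis length_greater_0_conv)
    have rs: "r \<noteq> s"
    proof
      assume "r = s"
      then have "ceq M (w1 @ [s, s]) (w @ [s])" using ceq_app[OF ww1 c_refl, of "[s]"] by simp
      then have "ceq M w1 (w @ [s])" using ceq_cancel2 by (metis c_sym c_trans)
      then have l1: "len (w @ [s]) = len w1" using len_ceq by simp
      have "ceq M ((w @ [s]) @ [s]) w" using ceq_cancel2[of M w s] by simp
      then have "len (w @ [s]) \<le> len ((w @ [s]) @ [s])" using l1 lw1 n0 n_def len_ceq by fastforce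
      then have "nonneg (act (w @ [s]) (root s))" by (rule pos_thm)
      then have "nonneg (\<lambda>x. - root t x)" using less.prems by (simp add: refl_root act_neg)
      then show False by (auto simp: nonneg_def root_def dest: spec[of _ t])
    qed
    let ?I = "{s, r}"
    define Cand where "Cand = (\<lambda>(x, y). set y \<subseteq> ?I \<and> ceq M (x @ y) w)"
    have "Cand (w1, [r])" using ww1 unfolding Cand_def by auto
    then obtain xy where xy: "Cand xy" "\<forall>z. Cand z \<longrightarrow> len (fst xy) \<le> len (fst z)"
      using ex_has_least_nat[of Cand "(w1, [r])" "\<lambda>z. len (fst z)"] by blast
    obtain x y where xye: "xy = (x, y)" by (cases xy)
    have C: "set y \<subseteq> ?I" "ceq M (x @ y) w" using xy(1) xye by (auto simp: Cand_def)
    have minx: "\<And>x' y'. Cand (x', y') \<Longrightarrow> len x \<le> len x'" using xy(2) xye by fastforce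
    have lx: "len x < n" using minx[OF \<open>Cand (w1, [r])\<close>] lw1 n0 by simp
    have gen: "nonneg (act x (root q))" if qI: "q \<in> ?I" for q
    proof -
      have "ceq M (x @ [q, q] @ y) (x @ y)" by (rule c_cancel)
      then have "ceq M ((x @ [q]) @ (q # y)) w" using C(2) by (simp, metis c_trans)
      then have "Cand (x @ [q], q # y)" using C(1) qI unfolding Cand_def by auto
      then have "len x \<le> len (x @ [q])" by (rule minx)
      then show ?thesis by (rule pos_thm)
    qed
    define g where "g = act y (root s)"
    define Xs where "Xs = act x (root s)"
    define Xr where "Xr = act x (root r)"
    have fsg: "fs g" unfolding g_def by simp
    have supp: "\<forall>z. z \<notin> ?I \<longrightarrow> g z = 0"
      unfolding g_def by (rule supp_act[OF C(1) fs_root]) (auto simp: root_def)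
    have ge: "g = (\<lambda>z. g s * root s z + g r * root r z)"
    proof
      fix z show "g z = g s * root s z + g r * root r z"
        using supp rs by (cases "z = s"; cases "z = r") (auto simp: root_def)
    qed
    have axg: "act x g = root t"
      using less.prems act_ceq[OF C(2), of "root s"] unfolding g_def by simp
    have axg2: "act x g = (\<lambda>z. g s * Xs z + g r * Xr z)"
      unfolding Xs_def Xr_def by (subst ge) (simp add: act_lin)
    have nXs: "nonneg Xs" unfolding Xs_def by (rule gen) simp
    have nXr: "nonneg Xr" unfolding Xr_def by (rule gen) simp
    have tv: "g s * Xs t + g r * Xr t = 1"
      using fun_cong[OF axg2, of t] fun_cong[OF axg, of t] by (simp add: root_def)
    have gnn: "0 \<le> g s \<and> 0 \<le> g r"
    proof -
      have "nonneg g \<or> nonneg (\<lambda>z. - g z)" unfolding g_def by (rule root_sign)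
      moreover have "\<not> nonneg (\<lambda>z. - g z)"
      proof
        assume "nonneg (\<lambda>z. - g z)"
        then have "g s \<le> 0" "g r \<le> 0" by (auto simp: nonneg_def)
        moreover have "0 \<le> Xs t" "0 \<le> Xr t" using nXs nXr by (auto simp: nonneg_def)
        ultimately have "g s * Xs t \<le> 0" "g r * Xr t \<le> 0" by (auto simp: mult_nonpos_nonneg)
        then show False using tv by linarith
      qed
      ultimately show ?thesis by (auto simp: nonneg_def)
    qed
    have fsXs: "fs Xs" "fs Xr" unfolding Xs_def Xr_def by simp_all
    have zero: "act x (\<lambda>z. 0) = (\<lambda>z. 0)" using act_smul[OF fs_root, of M x 0 s] by simp
    have onez: "g s = 0 \<or> g r = 0"
    proof (rule ccontr)
      assume "\<not> ?thesis"
      then have p: "0 < g s" "0 < g r" using gnn by auto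
      have vz: "Xs z = 0 \<and> Xr z = 0" if "z \<noteq> t" for z
      proof -
        have e: "g s * Xs z + g r * Xr z = 0"
          using fun_cong[OF axg2, of z] fun_cong[OF axg, of z] that by (simp add: root_def)
        have "0 \<le> Xs z" "0 \<le> Xr z" using nXs nXr by (auto simp: nonneg_def)
        then have "0 \<le> g s * Xs z" "0 \<le> g r * Xr z" using p by simp_all
        then have "g s * Xs z = 0" "g r * Xr z = 0" using e by linarith+
        then show ?thesis using p by simp
      qed
      have Xse: "Xs = (\<lambda>z. Xs t * root t z)" using vz by (auto simp: root_def)
      have Xre: "Xr = (\<lambda>z. Xr t * root t z)" using vz by (auto simp: root_def)
      have "Xr t \<noteq> 0"
      proof
        assume "Xr t = 0"
        then have "act x (root r) = act x (\<lambda>z. 0)" using Xre zero unfolding Xr_def by simp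
        moreover have f0: "fs (\<lambda>z::'a. 0::real)" by (simp add: fs_def)
        ultimately have "root r = (\<lambda>z. 0)" using act_inj[OF fs_root f0] by simp
        then have "root r r = 0" by simp
        then show False by (simp add: root_def)
      qed
      have "act x (\<lambda>z. Xr t * root s z) = (\<lambda>z. Xr t * Xs z)"
        unfolding Xs_def by (rule act_smul[OF fs_root])
      also have "\<dots> = (\<lambda>z. Xs t * Xr z)"
      proof
        fix z show "Xr t * Xs z = Xs t * Xr z"
          using vz[of z] by (cases "z = t") auto
      qed
      also have "\<dots> = act x (\<lambda>z. Xs t * root r z)"
        unfolding Xr_def by (rule act_smul[OF fs_root, symmetric])
      finally have "(\<lambda>z. Xr t * root s z) = (\<lambda>z. Xs t * root r z)"
        by (rule act_inj[OF fs_smul[OF fs_root] fs_smul[OF fs_root]])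
      then have "Xr t * root s s = Xs t * root r s" by (rule fun_cong)
      then show False using \<open>Xr t \<noteq> 0\<close> rs by (simp add: root_def)
    qed
    obtain c lam where cl: "c \<in> ?I" "0 < lam" "g = (\<lambda>z. lam * root c z)"
    proof (cases "g r = 0")
      case True
      then have "g = (\<lambda>z. g s * root s z)" using ge by simp
      moreover have "g s \<noteq> 0" using tv True by auto
      ultimately show ?thesis using that[of s "g s"] gnn by auto
    next
      case False
      then have "g s = 0" using onez by simp
      then have "g = (\<lambda>z. g r * root r z)" using ge by simp
      then show ?thesis using that[of r "g r"] gnn False by auto
    qed
    have D: "lam = 1 \<and> va_eq M (wconj y (pos [Tau s])) (pos [Tau c]) \<and> va_eq M (wconj y (pos [Sig s])) (pos [Sig c])"
      by (rule dih[OF rs[symmetric] C(1)]) (use cl g_def in auto)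
    have "act x (root c) = root t" using axg cl(3) D by simp
    then have IH: "va_eq M (wconj x (pos [Tau c])) (pos [Tau t]) \<and> va_eq M (wconj x (pos [Sig c])) (pos [Sig t])"
      using less.hyps lx n_def by blast
    show ?thesis using comb[OF c_sym[OF C(2)]] D IH by blast
  qed
qed

end



theorem lemma2p2:
  fixes M :: "'a::countable \<Rightarrow> 'a \<Rightarrow> enat" and u v :: "'a list" and s t :: 'a
  assumes "coxeter_matrix M"
    and "word_act M u (root s) = word_act M v (root t)"
  shows "va_eq M (wconj u (pos [Sig s])) (wconj v (pos [Sig t])) \<and>
         va_eq M (wconj u (pos [Tau s, Sig s])) (wconj v (pos [Tau t, Sig t]))"
proof -
  interpret cox M by (rule cox.intro) (rule assms(1))
  define w where "w = rev v @ u"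
  have "word_act M w (root s) = word_act M (rev v) (word_act M v (root t))"
    unfolding w_def using assms(2) by simp
  also have "\<dots> = root t" by (rule act_rev) simp
  finally have "word_act M w (root s) = root t" .
  then have h: "va_eq M (wconj w (pos [Tau s])) (pos [Tau t])" "va_eq M (wconj w (pos [Sig s])) (pos [Sig t])"
    using main by blast+
  have key: "va_eq M (wconj u g) (wconj v (wconj w g))" for g
  proof -
    have "va_eq M (wconj (v @ rev v @ u) g) (wconj u g)"
      by (rule wconj_cong[OF iotaW_rev_cancel va_refl])
    then show ?thesis unfolding w_def by (simp add: wconj_app va_sym)
  qed
  have 1: "va_eq M (wconj u (pos [Sig s])) (wconj v (pos [Sig t]))"
    using va_trans[OF key wconj_cong[OF va_refl h(2)]] .
  have a1: "va_eq M (wconj w (pos [Tau s] @ pos [Sig s])) (wconj w (pos [Tau s]) @ wconj w (pos [Sig s]))"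
    unfolding wconj_wc va_eq_def by (rule wc_mult')
  have a2: "va_eq M (wconj w (pos [Tau s]) @ wconj w (pos [Sig s])) (pos [Tau t] @ pos [Sig t])"
    using h unfolding va_eq_def by (rule pres_app)
  from va_trans[OF a1 a2] have "va_eq M (wconj w (pos [Tau s, Sig s])) (pos [Tau t, Sig t])"
    by (simp add: pos_def)
  then have 2: "va_eq M (wconj u (pos [Tau s, Sig s])) (wconj v (pos [Tau t, Sig t]))"
    using va_trans[OF key wconj_cong[OF va_refl]] by blast
  show ?thesis using 1 2 by blast
qed



end
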